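(* Let $(M,g)$ be a stochastically complete Riemannian manifold and $u:M\to\mathbb{R}^n$ a minimal immersion. (a) The image $u(M)$ is unbounded. (b) Let $P:\mathbb{R}^n\to\mathbb{R}^n$ be an orthogonal projection. If $\mathrm{rk}\,u+\mathrm{rk}\,P-n\ge 1$, then $P\circ u$ is unbounded.
   Context: $M$ is connected, without boundary, not assumed complete. $(M,g)$ is stochastically complete if for every $F\in\mathscr{C}^2(M)$ bounded above there is a sequence $(p_k)$ with $F(p_k)>\sup F-1/k$ and $\Delta_MF(p_k)<1/k$. A minimal immersion is an isometric immersion ($u^*\langle\cdot,\cdot\rangle=g$) with vanishing mean curvature. $\mathrm{rk}$ denotes the rank of the differential (so $\mathrm{rk}\,u=\dim M$). *)

theory Defs
  imports "HOL-Analysis.Analysis"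
begin

section \<open>Calculus in coordinates\<close>

text \<open>i-th partial derivative of a real function on real^'m.\<close>
definition pd :: "'m::finite \<Rightarrow> (real^'m \<Rightarrow> real) \<Rightarrow> real^'m \<Rightarrow> real" where
  "pd i f x = deriv (\<lambda>t. f (x + t *\<^sub>R axis i 1)) 0"

text \<open>componentwise partial derivative of a vector-valued function\<close>
definition pdv :: "'m::finite \<Rightarrow> (real^'m \<Rightarrow> real^'n) \<Rightarrow> real^'m \<Rightarrow> real^'n" where
  "pdv i f x = (\<chi> a. pd i (\<lambda>y. f y $ a) x)"

text \<open>C^k functions on an open set (all partial derivatives up to order k exist and are continuous)\<close>
fun Ck :: "nat \<Rightarrow> (real^'m::finite) set \<Rightarrow> (real^'m \<Rightarrow> real) \<Rightarrow> bool" where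
  "Ck 0 U f = continuous_on U f"
| "Ck (Suc k) U f = (continuous_on U f \<and>
      (\<forall>i. (\<forall>x\<in>U. (\<lambda>t. f (x + t *\<^sub>R axis i 1)) differentiable (at 0)) \<and> Ck k U (pd i f)))"

definition CkV :: "nat \<Rightarrow> (real^'m::finite) set \<Rightarrow> (real^'m \<Rightarrow> real^'n) \<Rightarrow> bool" where
  "CkV k U f = (\<forall>a. Ck k U (\<lambda>x. f x $ a))"

definition smooth_on :: "(real^'m::finite) set \<Rightarrow> (real^'m \<Rightarrow> real) \<Rightarrow> bool" where
  "smooth_on U f = (\<forall>k. Ck k U f)"

definition smoothV_on :: "(real^'m::finite) set \<Rightarrow> (real^'m \<Rightarrow> real^'n) \<Rightarrow> bool" where
  "smoothV_on U f = (\<forall>k. CkV k U f)"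

section \<open>Smooth manifolds via atlases\<close>

text \<open>A chart is a pair (U, phi): U open in M, phi a homeomorphism onto an open subset of real^'m.\<close>
type_synonym ('p,'m) chart = "'p set \<times> ('p \<Rightarrow> real^'m)"

definition is_chart :: "'p topology \<Rightarrow> ('p,'m::finite) chart \<Rightarrow> bool" where
  "is_chart T c = (openin T (fst c) \<and> open (snd c ` fst c) \<and>
      homeomorphic_map (subtopology T (fst c)) (top_of_set (snd c ` fst c)) (snd c))"

definition cdom :: "('p,'m::finite) chart \<Rightarrow> (real^'m) set" where
  "cdom c = snd c ` fst c"

definition cinv :: "('p,'m::finite) chart \<Rightarrow> real^'m \<Rightarrow> 'p" where
  "cinv c = inv_into (fst c) (snd c)"

text \<open>transition map from chart c1 to chart c2, defined on snd c1 ` (fst c1 \<inter> fst c2)\<close>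
definition trans_map :: "('p,'m::finite) chart \<Rightarrow> ('p,'m) chart \<Rightarrow> real^'m \<Rightarrow> real^'m" where
  "trans_map c1 c2 = snd c2 \<circ> cinv c1"

definition smooth_atlas :: "'p topology \<Rightarrow> ('p,'m::finite) chart set \<Rightarrow> bool" where
  "smooth_atlas T A =
     ((\<forall>c\<in>A. is_chart T c) \<and> (\<forall>p\<in>topspace T. \<exists>c\<in>A. p \<in> fst c) \<and>
      (\<forall>c1\<in>A. \<forall>c2\<in>A. smoothV_on (snd c1 ` (fst c1 \<inter> fst c2)) (trans_map c1 c2)))"

text \<open>A smooth manifold (Hausdorff, second countable, with a smooth atlas; dimension CARD('m) \<ge> 1).\<close>
definition smooth_manifold :: "'p topology \<Rightarrow> ('p,'m::finite) chart set \<Rightarrow> bool" where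
  "smooth_manifold T A = (Hausdorff_space T \<and> second_countable T \<and> smooth_atlas T A)"

text \<open>Functions on M of class C^k: smooth in every chart.\<close>
definition Ck_fun :: "nat \<Rightarrow> 'p topology \<Rightarrow> ('p,'m::finite) chart set \<Rightarrow> ('p \<Rightarrow> real) \<Rightarrow> bool" where
  "Ck_fun k T A F = (\<forall>c\<in>A. Ck k (cdom c) (F \<circ> cinv c))"

definition smooth_map :: "'p topology \<Rightarrow> ('p,'m::finite) chart set \<Rightarrow> ('p \<Rightarrow> real^'n) \<Rightarrow> bool" where
  "smooth_map T A u = (\<forall>c\<in>A. smoothV_on (cdom c) (u \<circ> cinv c))"

section \<open>Riemannian metrics in coordinates\<close>

text \<open>A Riemannian metric is given by its coordinate matrices gm c x (x \<in> cdom c) for each chart c: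
  smooth, symmetric, positive definite, and transforming as a (0,2)-tensor under changes of chart.\<close>
type_synonym ('p,'m) metric = "('p,'m) chart \<Rightarrow> real^'m \<Rightarrow> real^'m^'m"

definition riemannian_metric :: "'p topology \<Rightarrow> ('p,'m::finite) chart set \<Rightarrow> ('p,'m) metric \<Rightarrow> bool" where
  "riemannian_metric T A gm =
    ((\<forall>c\<in>A. \<forall>i j. smooth_on (cdom c) (\<lambda>x. gm c x $ i $ j)) \<and>
     (\<forall>c\<in>A. \<forall>x\<in>cdom c. \<forall>i j. gm c x $ i $ j = gm c x $ j $ i) \<and>
     (\<forall>c\<in>A. \<forall>x\<in>cdom c. \<forall>v. v \<noteq> 0 \<longrightarrow> v \<bullet> (gm c x *v v) > 0) \<and>
     (\<forall>c1\<in>A. \<forall>c2\<in>A. \<forall>x\<in>snd c1 ` (fst c1 \<inter> fst c2). \<forall>i j.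
        gm c1 x $ i $ j =
          (\<Sum>a\<in>UNIV. \<Sum>b\<in>UNIV. gm c2 (trans_map c1 c2 x) $ a $ b
              * pd i (\<lambda>y. trans_map c1 c2 y $ a) x * pd j (\<lambda>y. trans_map c1 c2 y $ b) x)))"

text \<open>Christoffel symbols Gamma^k_ij and the Laplace-Beltrami operator in a chart:
  Delta f = g^ij (d_i d_j f - Gamma^k_ij d_k f).\<close>
definition christoffel :: "('p,'m::finite) metric \<Rightarrow> ('p,'m) chart \<Rightarrow> real^'m \<Rightarrow> 'm \<Rightarrow> 'm \<Rightarrow> 'm \<Rightarrow> real" where
  "christoffel gm c x k i j =
     (1/2) * (\<Sum>l\<in>UNIV. matrix_inv (gm c x) $ k $ l *
        (pd i (\<lambda>y. gm c y $ j $ l) x + pd j (\<lambda>y. gm c y $ i $ l) x - pd l (\<lambda>y. gm c y $ i $ j) x))"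

definition laplacian_chart :: "('p,'m::finite) metric \<Rightarrow> ('p,'m) chart \<Rightarrow> (real^'m \<Rightarrow> real) \<Rightarrow> real^'m \<Rightarrow> real" where
  "laplacian_chart gm c f x =
     (\<Sum>i\<in>UNIV. \<Sum>j\<in>UNIV. matrix_inv (gm c x) $ i $ j *
        (pd j (pd i f) x - (\<Sum>k\<in>UNIV. christoffel gm c x k i j * pd k f x)))"

text \<open>Laplace-Beltrami operator of F at p, computed in some chart of the atlas around p
  (the value does not depend on the chart).\<close>
definition laplacian :: "('p,'m::finite) chart set \<Rightarrow> ('p,'m) metric \<Rightarrow> ('p \<Rightarrow> real) \<Rightarrow> 'p \<Rightarrow> real" where
  "laplacian A gm F p =
     (let c = (SOME c. c \<in> A \<and> p \<in> fst c) in laplacian_chart gm c (F \<circ> cinv c) (snd c p))"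

definition stochastically_complete :: "'p topology \<Rightarrow> ('p,'m::finite) chart set \<Rightarrow> ('p,'m) metric \<Rightarrow> bool" where
  "stochastically_complete T A gm =
     (\<forall>F. Ck_fun 2 T A F \<and> bdd_above (F ` topspace T) \<longrightarrow>
        (\<exists>p::nat \<Rightarrow> 'p. \<forall>k\<ge>1. p k \<in> topspace T \<and>
            F (p k) > (SUP q\<in>topspace T. F q) - 1 / real k \<and>
            laplacian A gm F (p k) < 1 / real k))"

section \<open>Minimal immersions\<close>

text \<open>Jacobian matrix of the local representative of u in chart c (columns d_i u)\<close>
definition jacobian :: "('p,'m::finite) chart \<Rightarrow> ('p \<Rightarrow> real^'n::finite) \<Rightarrow> real^'m \<Rightarrow> real^'m^'n" where
  "jacobian c u x = (\<chi> a i. pdv i (u \<circ> cinv c) x $ a)"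

text \<open>Induced metric (first fundamental form) of u in chart c\<close>
definition induced_metric :: "('p,'m::finite) chart \<Rightarrow> ('p \<Rightarrow> real^'n::finite) \<Rightarrow> real^'m \<Rightarrow> real^'m^'m" where
  "induced_metric c u x = (\<chi> i j. pdv i (u \<circ> cinv c) x \<bullet> pdv j (u \<circ> cinv c) x)"

text \<open>Orthogonal projection of w onto the tangent space span{d_k u}\<close>
definition tangential :: "('p,'m::finite) chart \<Rightarrow> ('p \<Rightarrow> real^'n::finite) \<Rightarrow> real^'m \<Rightarrow> real^'n \<Rightarrow> real^'n" where
  "tangential c u x w =
     (\<Sum>k\<in>UNIV. \<Sum>l\<in>UNIV. (matrix_inv (induced_metric c u x) $ k $ l * (w \<bullet> pdv l (u \<circ> cinv c) x))
        *\<^sub>R pdv k (u \<circ> cinv c) x)"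

text \<open>Second fundamental form II(d_i,d_j) = normal part of d_i d_j u, and mean curvature vector
  H = (1/m) tr_g II.\<close>
definition second_ff :: "('p,'m::finite) chart \<Rightarrow> ('p \<Rightarrow> real^'n::finite) \<Rightarrow> real^'m \<Rightarrow> 'm \<Rightarrow> 'm \<Rightarrow> real^'n" where
  "second_ff c u x i j =
     (let w = pdv j (pdv i (u \<circ> cinv c)) x in w - tangential c u x w)"

definition mean_curvature :: "('p,'m::finite) chart \<Rightarrow> ('p \<Rightarrow> real^'n::finite) \<Rightarrow> real^'m \<Rightarrow> real^'n" where
  "mean_curvature c u x =
     (1 / real CARD('m)) *\<^sub>R
       (\<Sum>i\<in>UNIV. \<Sum>j\<in>UNIV. matrix_inv (induced_metric c u x) $ i $ j *\<^sub>R second_ff c u x i j)"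

text \<open>Smooth immersion (differential of rank dim M everywhere), isometric for gm, with
  vanishing mean curvature.\<close>
definition minimal_immersion ::
    "'p topology \<Rightarrow> ('p,'m::finite) chart set \<Rightarrow> ('p,'m) metric \<Rightarrow> ('p \<Rightarrow> real^'n::finite) \<Rightarrow> bool" where
  "minimal_immersion T A gm u =
     (smooth_map T A u \<and>
      (\<forall>c\<in>A. \<forall>x\<in>cdom c. rank (jacobian c u x) = CARD('m)) \<and>
      (\<forall>c\<in>A. \<forall>x\<in>cdom c. gm c x = induced_metric c u x) \<and>
      (\<forall>c\<in>A. \<forall>x\<in>cdom c. mean_curvature c u x = 0))"

text \<open>Orthogonal projections of R^n and their rank\<close>
definition orth_projection :: "(real^'n::finite \<Rightarrow> real^'n) \<Rightarrow> bool" where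
  "orth_projection P = (linear P \<and> P \<circ> P = P \<and> (\<forall>x y. P x \<bullet> y = x \<bullet> P y))"

definition rk_map :: "(real^'n::finite \<Rightarrow> real^'k::finite) \<Rightarrow> nat" where
  "rk_map P = dim (range P)"

end

theory Submission
  imports Defs "HOL-Analysis.Analysis"
begin
definition dfa :: "'m::finite \<Rightarrow> (real^'m \<Rightarrow> real) \<Rightarrow> real^'m \<Rightarrow> bool" where
  "dfa i g x = ((\<lambda>t. g (x + t *\<^sub>R axis i 1)) differentiable (at 0))"

lemma pd_deriv:
  assumes "dfa i g x"
  shows "((\<lambda>t. g (x + t *\<^sub>R axis i 1)) has_real_derivative pd i g x) (at 0)"
  using assms unfolding dfa_def pd_def
  by (simp add: DERIV_deriv_iff_real_differentiable)

lemma pd_unique: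
  assumes "((\<lambda>t. g (x + t *\<^sub>R axis i 1)) has_real_derivative D) (at 0)"
  shows "pd i g x = D" "dfa i g x"
  using assms unfolding dfa_def pd_def
  by (auto simp: DERIV_imp_deriv real_differentiable_def)

lemma ev_line:
  fixes x v :: "'a::real_normed_vector"
  assumes "open U" "x \<in> U"
  shows "eventually (\<lambda>t. x + t *\<^sub>R v \<in> U) (nhds (0::real))"
proof -
  have c: "continuous_on UNIV (\<lambda>t::real. x + t *\<^sub>R v)" by (intro continuous_intros)
  have "open ((\<lambda>t::real. x + t *\<^sub>R v) -` U)"
    using open_vimage[OF assms(1) c] by simp
  then show ?thesis using assms unfolding eventually_nhds by (intro exI[of _ "(\<lambda>t::real. x + t *\<^sub>R v) -` U"]) auto
qed

lemma pd_cong: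
  assumes "open U" "x \<in> U" "\<And>y. y \<in> U \<Longrightarrow> g y = h y"
  shows "pd i g x = pd i h x" "dfa i g x = dfa i h x"
proof -
  have ev: "eventually (\<lambda>t. g (x + t *\<^sub>R axis i 1) = h (x + t *\<^sub>R axis i 1)) (nhds 0)"
    using ev_line[OF assms(1,2), of "axis i 1"] assms(3) by (auto elim: eventually_mono)
  have eq: "\<And>D. ((\<lambda>t. g (x + t *\<^sub>R axis i 1)) has_real_derivative D) (at 0) \<longleftrightarrow>
             ((\<lambda>t. h (x + t *\<^sub>R axis i 1)) has_real_derivative D) (at 0)"
    by (rule DERIV_cong_ev[OF refl ev refl])
  show "pd i g x = pd i h x" unfolding pd_def deriv_def using eq by simp
  show "dfa i g x = dfa i h x" unfolding dfa_def real_differentiable_def using eq by simp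
qed

lemma pd_add:
  assumes "dfa i g x" "dfa i h x"
  shows "pd i (\<lambda>y. g y + h y) x = pd i g x + pd i h x" "dfa i (\<lambda>y. g y + h y) x"
  using DERIV_add[OF pd_deriv[OF assms(1)] pd_deriv[OF assms(2)]] pd_unique[of "\<lambda>y. g y + h y"] by auto

lemma pd_mult:
  assumes "dfa i g x" "dfa i h x"
  shows "pd i (\<lambda>y. g y * h y) x = pd i g x * h x + g x * pd i h x" "dfa i (\<lambda>y. g y * h y) x"
  using DERIV_mult[OF pd_deriv[OF assms(1)] pd_deriv[OF assms(2)]] pd_unique[of "\<lambda>y. g y * h y"]
  by (auto simp: mult.commute)

lemma pd_const:
  shows "pd i (\<lambda>y. c) x = 0" "dfa i (\<lambda>y. c) x"
  using pd_unique[of "\<lambda>y. c" x i 0] by auto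

lemma pd_cmult:
  assumes "dfa i g x"
  shows "pd i (\<lambda>y. c * g y) x = c * pd i g x" "dfa i (\<lambda>y. c * g y) x"
  using pd_mult[OF pd_const(2) assms, of c] pd_const by auto

lemma pd_sum:
  assumes "finite S" "\<And>s. s \<in> S \<Longrightarrow> dfa i (g s) x"
  shows "pd i (\<lambda>y. \<Sum>s\<in>S. g s y) x = (\<Sum>s\<in>S. pd i (g s) x) \<and> dfa i (\<lambda>y. \<Sum>s\<in>S. g s y) x"
  using assms
proof (induction S rule: finite_induct)
  case empty
  then show ?case using pd_const[of i 0 x] by simp
next
  case (insert a S)
  then have h: "pd i (\<lambda>y. \<Sum>s\<in>S. g s y) x = (\<Sum>s\<in>S. pd i (g s) x)" "dfa i (\<lambda>y. \<Sum>s\<in>S. g s y) x"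
    by auto
  show ?case using insert pd_add[OF _ h(2), of "g a"] h by simp
qed

lemma Ck_Suc_iff: "Ck (Suc k) U f = (continuous_on U f \<and> (\<forall>i. (\<forall>x\<in>U. dfa i f x) \<and> Ck k U (pd i f)))"
  by (simp add: dfa_def)

declare Ck.simps(2)[simp del]

lemma Ck_cont: "Ck k U f \<Longrightarrow> continuous_on U f"
  by (cases k) (auto simp: Ck_Suc_iff)

lemma Ck_cong:
  assumes "open U" "\<And>y. y \<in> U \<Longrightarrow> f y = g y" "Ck k U f"
  shows "Ck k U g"
  using assms(2,3)
proof (induction k arbitrary: f g)
  case 0
  then show ?case using continuous_on_cong by auto
next
  case (Suc k)
  have c: "continuous_on U g" using Suc continuous_on_cong Ck_cont by metis
  have "\<forall>x\<in>U. dfa i g x" for i using Suc.prems pd_cong(2)[OF assms(1), of _ f g i] by (auto simp: Ck_Suc_iff)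
  moreover have "Ck k U (pd i g)" for i
    using Suc.IH[of "pd i f" "pd i g"] Suc.prems pd_cong(1)[OF assms(1), of _ f g i] by (auto simp: Ck_Suc_iff)
  ultimately show ?case using c by (simp add: Ck_Suc_iff)
qed

lemma Ck_mono: "Ck (Suc k) U f \<Longrightarrow> Ck k U f"
proof (induction k arbitrary: f)
  case 0
  then show ?case by (simp add: Ck_Suc_iff)
next
  case (Suc k)
  then show ?case by (simp add: Ck_Suc_iff)
qed

lemma Ck_le: "Ck k U f \<Longrightarrow> j \<le> k \<Longrightarrow> Ck j U f"
proof (induction k)
  case 0
  then show ?case by simp
next
  case (Suc k)
  then show ?case by (cases "j = Suc k") (auto simp: le_Suc_eq dest: Ck_mono)
qed

lemma Ck_const: "Ck k (U::(real^'m::finite) set) (\<lambda>y. c)"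
proof (induction k arbitrary: c)
  case 0
  then show ?case by simp
next
  case (Suc k)
  have "pd i (\<lambda>y::real^'m. c) = (\<lambda>y. 0)" for i using pd_const by auto
  then show ?case using Suc pd_const by (auto simp add: Ck_Suc_iff continuous_on_const)
qed

lemma Ck_add:
  assumes "open U" "Ck k U f" "Ck k U g"
  shows "Ck k U (\<lambda>y. f y + g y)"
  using assms(2,3)
proof (induction k arbitrary: f g)
  case 0
  then show ?case by (simp add: continuous_on_add)
next
  case (Suc k)
  have "Ck k U (pd i (\<lambda>y. f y + g y))" for i
  proof -
    have "Ck k U (\<lambda>y. pd i f y + pd i g y)" using Suc by (auto simp: Ck_Suc_iff)
    then show ?thesis
      by (rule Ck_cong[OF assms(1), rotated]) (use Suc.prems in \<open>auto simp: Ck_Suc_iff pd_add(1)\<close>)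
  qed
  then show ?case using Suc.prems by (auto simp: Ck_Suc_iff pd_add(2) intro: continuous_on_add)
qed

lemma Ck_mult:
  assumes "open U" "Ck k U f" "Ck k U g"
  shows "Ck k U (\<lambda>y. f y * g y)"
  using assms(2,3)
proof (induction k arbitrary: f g)
  case 0
  then show ?case by (simp add: continuous_on_mult)
next
  case (Suc k)
  have fk: "Ck k U f" "Ck k U g" using Suc.prems Ck_mono by auto
  have "Ck k U (pd i (\<lambda>y. f y * g y))" for i
  proof -
    have "Ck k U (\<lambda>y. pd i f y * g y + f y * pd i g y)"
      using Suc fk by (intro Ck_add[OF assms(1)] Suc.IH) (auto simp: Ck_Suc_iff)
    then show ?thesis
      by (rule Ck_cong[OF assms(1), rotated]) (use Suc.prems in \<open>auto simp: Ck_Suc_iff pd_mult(1)\<close>)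
  qed
  then show ?case using Suc.prems by (auto simp: Ck_Suc_iff pd_mult(2) intro: continuous_on_mult)
qed

lemma Ck_cmult:
  assumes "open U" "Ck k U f"
  shows "Ck k U (\<lambda>y. c * f y)"
  using Ck_mult[OF assms(1) Ck_const assms(2)] .

lemma Ck_sum:
  assumes "open U" "finite S" "\<And>s. s \<in> S \<Longrightarrow> Ck k U (g s)"
  shows "Ck k U (\<lambda>y. \<Sum>s\<in>S. g s y)"
  using assms(2,3)
proof (induction S rule: finite_induct)
  case empty
  then show ?case using Ck_const by simp
next
  case (insert a S)
  then show ?case using Ck_add[OF assms(1)] by simp
qed

lemma pd_deriv_shift:
  assumes "dfa i g (z + s *\<^sub>R axis i 1)"
  shows "((\<lambda>t. g (z + t *\<^sub>R axis i 1)) has_real_derivative pd i g (z + s *\<^sub>R axis i 1)) (at s)"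
proof -
  have "((\<lambda>t. g ((z + s *\<^sub>R axis i 1) + t *\<^sub>R axis i 1)) has_real_derivative pd i g (z + s *\<^sub>R axis i 1)) (at 0)"
    using pd_deriv[OF assms] .
  then have "((\<lambda>t. g (z + (t + s) *\<^sub>R axis i 1)) has_real_derivative pd i g (z + s *\<^sub>R axis i 1)) (at 0)"
    by (simp add: algebra_simps)
  moreover have "((\<lambda>t. g (z + t *\<^sub>R axis i 1)) has_real_derivative pd i g (z + s *\<^sub>R axis i 1)) (at (0 + s))
     = ((\<lambda>t. g (z + (t + s) *\<^sub>R axis i 1)) has_real_derivative pd i g (z + s *\<^sub>R axis i 1)) (at 0)"
    by (rule DERIV_shift)
  ultimately show ?thesis by simp
qed

lemma norm_axis1: "norm (axis i (1::real)) = 1"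
  by simp

lemma schwarz_mvt:
  fixes f :: "real^'m::finite \<Rightarrow> real"
  assumes U: "ball x r \<subseteq> U" and h: "0 < h" "2 * h < r"
    and d1: "\<And>y. y \<in> U \<Longrightarrow> dfa i f y"
    and d2: "\<And>y. y \<in> U \<Longrightarrow> dfa j (pd i f) y"
  shows "\<exists>p. dist p x < 2 * h \<and>
     f (x + h *\<^sub>R axis i 1 + h *\<^sub>R axis j 1) - f (x + h *\<^sub>R axis i 1) - f (x + h *\<^sub>R axis j 1) + f x
       = h^2 * pd j (pd i f) p"
proof -
  let ?ei = "axis i (1::real)" and ?ej = "axis j (1::real)"
  have inU: "x + s *\<^sub>R ?ei + t *\<^sub>R ?ej \<in> U" if "0 \<le> s" "s \<le> h" "0 \<le> t" "t \<le> h" for s t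
  proof -
    have "norm (s *\<^sub>R ?ei + t *\<^sub>R ?ej) \<le> norm (s *\<^sub>R ?ei) + norm (t *\<^sub>R ?ej)" by (rule norm_triangle_ineq)
    also have "\<dots> = s + t" using that by (simp add: norm_axis1)
    finally have "norm (s *\<^sub>R ?ei + t *\<^sub>R ?ej) < r" using that h by linarith
    then have "x + (s *\<^sub>R ?ei + t *\<^sub>R ?ej) \<in> ball x r"
      unfolding mem_ball by (metis dist_commute dist_norm add_diff_cancel_left')
    then show ?thesis using U by (auto simp: add.assoc)
  qed
  define Psi where "Psi s = f (x + h *\<^sub>R ?ej + s *\<^sub>R ?ei) - f (x + s *\<^sub>R ?ei)" for s
  have "DERIV Psi s :> pd i f (x + h *\<^sub>R ?ej + s *\<^sub>R ?ei) - pd i f (x + s *\<^sub>R ?ei)" if "0 \<le> s" "s \<le> h" for s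
  proof -
    have a: "dfa i f (x + h *\<^sub>R ?ej + s *\<^sub>R ?ei)"
      using d1 inU[of s h] that h by (simp add: algebra_simps)
    have b: "dfa i f (x + s *\<^sub>R ?ei)"
      using d1 inU[of s 0] that h by simp
    show ?thesis unfolding Psi_def
      by (intro DERIV_diff pd_deriv_shift a b)
  qed
  then obtain \<xi> where xi: "0 < \<xi>" "\<xi> < h"
     "Psi h - Psi 0 = (h - 0) * (pd i f (x + h *\<^sub>R ?ej + \<xi> *\<^sub>R ?ei) - pd i f (x + \<xi> *\<^sub>R ?ei))"
    using MVT2[OF h(1), of Psi "\<lambda>s. pd i f (x + h *\<^sub>R ?ej + s *\<^sub>R ?ei) - pd i f (x + s *\<^sub>R ?ei)"] by auto
  define Chi where "Chi t = pd i f (x + \<xi> *\<^sub>R ?ei + t *\<^sub>R ?ej)" for t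
  have "DERIV Chi t :> pd j (pd i f) (x + \<xi> *\<^sub>R ?ei + t *\<^sub>R ?ej)" if "0 \<le> t" "t \<le> h" for t
    unfolding Chi_def using d2 inU[of \<xi> t] that xi by (intro pd_deriv_shift) auto
  then obtain \<eta> where eta: "0 < \<eta>" "\<eta> < h"
     "Chi h - Chi 0 = (h - 0) * pd j (pd i f) (x + \<xi> *\<^sub>R ?ei + \<eta> *\<^sub>R ?ej)"
    using MVT2[OF h(1), of Chi "\<lambda>t. pd j (pd i f) (x + \<xi> *\<^sub>R ?ei + t *\<^sub>R ?ej)"] by auto
  have "dist (x + \<xi> *\<^sub>R ?ei + \<eta> *\<^sub>R ?ej) x < 2 * h"
  proof -
    have "norm (\<xi> *\<^sub>R ?ei + \<eta> *\<^sub>R ?ej) \<le> norm (\<xi> *\<^sub>R ?ei) + norm (\<eta> *\<^sub>R ?ej)" by (rule norm_triangle_ineq)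
    also have "\<dots> = \<xi> + \<eta>" using xi eta by (simp add: norm_axis1)
    finally show ?thesis using xi eta by (simp add: dist_norm add.assoc)
  qed
  moreover have "f (x + h *\<^sub>R ?ei + h *\<^sub>R ?ej) - f (x + h *\<^sub>R ?ei) - f (x + h *\<^sub>R ?ej) + f x
      = h^2 * pd j (pd i f) (x + \<xi> *\<^sub>R ?ei + \<eta> *\<^sub>R ?ej)"
  proof -
    have "f (x + h *\<^sub>R ?ei + h *\<^sub>R ?ej) - f (x + h *\<^sub>R ?ei) - f (x + h *\<^sub>R ?ej) + f x = Psi h - Psi 0"
      unfolding Psi_def by (simp add: algebra_simps)
    also have "\<dots> = h * (Chi h - Chi 0)" using xi(3) unfolding Chi_def by (simp add: algebra_simps)
    finally show ?thesis using eta(3) by (simp add: power2_eq_square)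
  qed
  ultimately show ?thesis by blast
qed

lemma schwarz:
  fixes f :: "real^'m::finite \<Rightarrow> real"
  assumes "open U" "x \<in> U" "Ck 2 U f"
  shows "pd j (pd i f) x = pd i (pd j f) x"
proof -
  have C: "\<And>i y. y \<in> U \<Longrightarrow> dfa i f y" "\<And>i j y. y \<in> U \<Longrightarrow> dfa j (pd i f) y"
    "\<And>i j. continuous_on U (pd j (pd i f))"
    using assms(3) by (auto simp: Ck_Suc_iff numeral_2_eq_2 intro: Ck_cont)
  obtain r where r: "r > 0" "ball x r \<subseteq> U" using assms(1,2) open_contains_ball by blast
  let ?D1 = "pd j (pd i f)" and ?D2 = "pd i (pd j f)"
  have c1: "isCont ?D1 x" "isCont ?D2 x"
    using C(3) assms(1,2) continuous_on_eq_continuous_at by blast+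
  have "\<bar>?D1 x - ?D2 x\<bar> < 2 * e" if e: "e > 0" for e
  proof -
    obtain d1 where d1: "d1 > 0" "\<And>y. dist y x < d1 \<Longrightarrow> dist (?D1 y) (?D1 x) < e"
      using c1(1) e unfolding continuous_at_eps_delta by blast
    obtain d2 where d2: "d2 > 0" "\<And>y. dist y x < d2 \<Longrightarrow> dist (?D2 y) (?D2 x) < e"
      using c1(2) e unfolding continuous_at_eps_delta by blast
    define h where "h = min r (min d1 d2) / 3"
    have h: "0 < h" "2 * h < r" "2 * h < d1" "2 * h < d2" using r d1 d2 by (auto simp: h_def)
    obtain p1 where p1: "dist p1 x < 2 * h"
      "f (x + h *\<^sub>R axis i 1 + h *\<^sub>R axis j 1) - f (x + h *\<^sub>R axis i 1) - f (x + h *\<^sub>R axis j 1) + f x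
       = h^2 * ?D1 p1"
      using schwarz_mvt[OF r(2) h(1,2), of i f j] C by blast
    obtain p2 where p2: "dist p2 x < 2 * h"
      "f (x + h *\<^sub>R axis j 1 + h *\<^sub>R axis i 1) - f (x + h *\<^sub>R axis j 1) - f (x + h *\<^sub>R axis i 1) + f x
       = h^2 * ?D2 p2"
      using schwarz_mvt[OF r(2) h(1,2), of j f i] C by blast
    have "h^2 * ?D1 p1 = h^2 * ?D2 p2" using p1(2) p2(2) by (simp add: algebra_simps)
    then have eq: "?D1 p1 = ?D2 p2" using h(1) by simp
    have "dist (?D1 p1) (?D1 x) < e" using d1(2) p1(1) h by auto
    moreover have "dist (?D2 p2) (?D2 x) < e" using d2(2) p2(1) h by auto
    ultimately show ?thesis using eq by (simp add: dist_real_def)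
  qed
  from this[of "\<bar>?D1 x - ?D2 x\<bar> / 2"] show ?thesis
    by (cases "\<bar>?D1 x - ?D2 x\<bar> > 0") auto
qed

lemma frob_bound:
  fixes N :: "real^'n^'n" and w :: "real^'n"
  assumes "w \<noteq> 0" "N *v w = w"
  shows "(\<Sum>r\<in>UNIV. \<Sum>s\<in>UNIV. N $ r $ s * N $ r $ s) \<ge> 1"
proof -
  have row: "(N *v w) $ r = (N $ r) \<bullet> w" for r
    by (simp add: matrix_vector_mult_def inner_vec_def mult.commute)
  have "w \<bullet> w = (N *v w) \<bullet> (N *v w)" using assms by simp
  also have "\<dots> = (\<Sum>r\<in>UNIV. ((N $ r) \<bullet> w)^2)" by (simp add: inner_vec_def row power2_eq_square)
  also have "\<dots> \<le> (\<Sum>r\<in>UNIV. ((N $ r) \<bullet> (N $ r)) * (w \<bullet> w))"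
    by (intro sum_mono) (metis Cauchy_Schwarz_ineq)
  also have "\<dots> = (\<Sum>r\<in>UNIV. \<Sum>s\<in>UNIV. N $ r $ s * N $ r $ s) * (w \<bullet> w)"
    by (simp add: sum_distrib_right inner_vec_def)
  finally have "1 * (w \<bullet> w) \<le> (\<Sum>r\<in>UNIV. \<Sum>s\<in>UNIV. N $ r $ s * N $ r $ s) * (w \<bullet> w)" by simp
  moreover have "w \<bullet> w > 0" using assms(1) by simp
  ultimately show ?thesis by (meson mult_le_cancel_right_pos)
qed

lemma frob_trace: "(\<Sum>r\<in>UNIV. \<Sum>s\<in>UNIV. N $ r $ s * N $ r $ s) = trace (N ** transpose N)"
  for N :: "real^'n^'n"
  by (simp add: trace_def matrix_matrix_mult_def transpose_def)

lemma matrix_sym: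
  assumes "linear P" "\<And>x y. P x \<bullet> y = x \<bullet> P y"
  shows "transpose (matrix P) = matrix (P :: real^'n \<Rightarrow> real^'n)"
proof -
  have "P (axis j 1) $ i = P (axis i 1) $ j" for i j
    using assms(2)[of "axis j 1" "axis i 1"] by (simp add: inner_axis inner_axis')
  then show ?thesis by (simp add: transpose_def matrix_def vec_eq_iff)
qed

lemma linalg_bound:
  fixes a :: "'m::finite \<Rightarrow> real^'n::finite" and P :: "real^'n \<Rightarrow> real^'n"
  assumes rk: "rank (\<chi> r i. a i $ r) = CARD('m)" and P: "orth_projection P"
    and dimc: "int CARD('m) + int (rk_map P) - int CARD('n) \<ge> 1"
  shows "(\<Sum>i\<in>UNIV. \<Sum>j\<in>UNIV. matrix_inv (\<chi> i j. a i \<bullet> a j) $ i $ j * (P (a j) \<bullet> P (a i))) \<ge> 1"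
proof -
  define A :: "real^'m^'n" where "A = (\<chi> r i. a i $ r)"
  define G where "G = transpose A ** A"
  have Gdef: "G = (\<chi> i j. a i \<bullet> a j)"
    by (simp add: G_def A_def matrix_matrix_mult_def transpose_def inner_vec_def vec_eq_iff)
  have injA: "inj ((*v) A)" using rk full_rank_injective A_def by metis
  have "inj ((*v) G)"
  proof (rule injI)
    fix v w assume "G *v v = G *v w"
    then have "G *v (v - w) = 0" by (simp add: matrix_vector_mult_diff_distrib)
    then have "(v - w) \<bullet> (G *v (v - w)) = 0" by simp
    moreover have "(v - w) \<bullet> (G *v (v - w)) = (A *v (v - w)) \<bullet> (A *v (v - w))"
      unfolding G_def by (simp add: matrix_vector_mul_assoc[symmetric]) (metis dot_lmul_matrix inner_commute)
    ultimately have "A *v (v - w) = 0" by simp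
    then have "A *v v = A *v w" by (simp add: matrix_vector_mult_diff_distrib)
    then show "v = w" using injA by (simp add: inj_eq)
  qed
  then obtain B where "B ** G = mat 1" using matrix_left_invertible_injective by blast
  then have "invertible G" unfolding invertible_def using matrix_left_right_inverse by blast
  then have Gi: "G ** matrix_inv G = mat 1 \<and> matrix_inv G ** G = mat 1"
    unfolding invertible_def matrix_inv_def by (rule someI_ex)
  define Gi where "Gi = matrix_inv G"
  have Gi1: "G ** Gi = mat 1" "Gi ** G = mat 1" using Gi Gi_def by auto
  have Gsym: "transpose G = G" unfolding G_def by (simp add: matrix_transpose_mul)
  have "transpose Gi ** G = mat 1"
    using arg_cong[OF Gi1(1), of transpose] by (simp add: matrix_transpose_mul Gsym)
  then have "transpose Gi = Gi"
    by (metis Gi1(1) matrix_mul_assoc matrix_mul_lid matrix_mul_rid)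
  define Q where "Q = A ** Gi ** transpose A"
  have Qsym: "transpose Q = Q"
    unfolding Q_def by (simp add: matrix_transpose_mul \<open>transpose Gi = Gi\<close> matrix_mul_assoc)
  have QA: "Q ** A = A"
    unfolding Q_def by (metis G_def Gi1(2) matrix_mul_assoc matrix_mul_rid)
  have QQ: "Q ** Q = Q"
    by (metis Q_def QA matrix_mul_assoc)
  define Pm where "Pm = matrix P"
  have linP: "linear P" and PP: "P \<circ> P = P" and Psym: "\<And>x y. P x \<bullet> y = x \<bullet> P y"
    using P by (auto simp: orth_projection_def)
  have Pmv: "Pm *v x = P x" for x unfolding Pm_def using linP by (simp add: matrix_works linear_matrix_vector_mul_eq)
  have PmT: "transpose Pm = Pm" unfolding Pm_def using matrix_sym linP Psym by blast
  have PmPm: "Pm ** Pm = Pm" unfolding Pm_def using matrix_compose[OF linP linP] PP by simp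
  define N where "N = Pm ** Q"
  \<comment> \<open>existence of w\<close>
  have sub1: "subspace (range ((*v) A))" by (simp add: linear_subspace_image)
  have sub2: "subspace (range P)" using linP by (simp add: linear_subspace_image)
  have "dim (range ((*v) A)) = CARD('m)" using rk rank_dim_range[of A] A_def by simp
  moreover have "dim (range P) = rk_map P" by (simp add: rk_map_def)
  moreover have "dim {x + y |x y. x \<in> range ((*v) A) \<and> y \<in> range P} \<le> CARD('n)"
    by (rule dim_subset_UNIV_cart)
  ultimately have "dim (range ((*v) A) \<inter> range P) \<noteq> 0"
    using dim_sums_Int[OF sub1 sub2] dimc by linarith
  then obtain w where w: "w \<in> range ((*v) A)" "w \<in> range P" "w \<noteq> 0"
  proof -
    have "\<not> (range ((*v) A) \<inter> range P \<subseteq> {0})" using \<open>dim (range ((*v) A) \<inter> range P) \<noteq> 0\<close> dim_eq_0 by metis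
    then show ?thesis using that by blast
  qed
  obtain v where v: "w = A *v v" using w(1) by auto
  obtain z where z: "w = P z" using w(2) by auto
  have Pw: "P w = w" using z PP by (metis comp_apply)
  have "Q *v w = w" using v QA by (simp add: matrix_vector_mul_assoc)
  then have "N *v w = w" unfolding N_def by (simp add: matrix_vector_mul_assoc[symmetric] Pmv Pw)
  then have "(\<Sum>r\<in>UNIV. \<Sum>s\<in>UNIV. N $ r $ s * N $ r $ s) \<ge> 1" by (rule frob_bound[OF w(3)])
  then have F1: "trace (N ** transpose N) \<ge> 1" by (simp only: frob_trace)
  have "N ** transpose N = Pm ** (Q ** Q) ** Pm"
    unfolding N_def by (simp add: matrix_transpose_mul PmT Qsym matrix_mul_assoc)
  then have "N ** transpose N = Pm ** Q ** Pm" by (simp only: QQ)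
  then have "trace (N ** transpose N) = trace (Pm ** Q)"
    by (metis PmPm matrix_mul_assoc trace_mul_sym)
  also have "\<dots> = trace ((Pm ** (A ** Gi)) ** transpose A)" unfolding Q_def by (simp only: matrix_mul_assoc)
  also have "\<dots> = trace (transpose A ** (Pm ** (A ** Gi)))" by (rule trace_mul_sym)
  also have "\<dots> = trace ((transpose A ** (Pm ** A)) ** Gi)" by (simp only: matrix_mul_assoc)
  also have "\<dots> = trace (Gi ** (transpose A ** (Pm ** A)))" by (rule trace_mul_sym)
  also have "\<dots> = (\<Sum>i\<in>UNIV. \<Sum>j\<in>UNIV. Gi $ i $ j * (P (a j) \<bullet> P (a i)))"
  proof -
    have TM: "(transpose A ** M) $ j $ i = (\<Sum>r\<in>UNIV. a j $ r * M $ r $ i)" for M :: "real^'m^'n" and i j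
      by (simp add: matrix_matrix_mult_def transpose_def A_def)
    have col: "column i A = a i" for i by (simp add: column_def A_def vec_eq_iff)
    have PA: "(Pm ** A) $ r $ i = P (a i) $ r" for r i
      using Pmv[of "a i"] col[of i]
      by (simp add: matrix_matrix_mult_def matrix_vector_mult_def column_def vec_eq_iff)
    have E: "(transpose A ** (Pm ** A)) $ j $ i = P (a j) \<bullet> P (a i)" for i j
    proof -
      have "(transpose A ** (Pm ** A)) $ j $ i = a j \<bullet> P (a i)"
        unfolding TM PA by (simp add: inner_vec_def)
      also have "\<dots> = P (a j) \<bullet> P (a i)"
        using Psym[of "a j" "P (a i)"] PP by (metis comp_apply)
      finally show ?thesis .
    qed
    have "trace (Gi ** (transpose A ** (Pm ** A))) = (\<Sum>i\<in>UNIV. \<Sum>j\<in>UNIV. Gi $ i $ j * (transpose A ** (Pm ** A)) $ j $ i)"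
      by (simp only: trace_def matrix_matrix_mult_def vec_lambda_beta)
    then show ?thesis by (simp only: E)
  qed
  finally show ?thesis using F1 Gi_def Gdef by simp
qed

lemma pdv_comp: "pdv i f x $ b = pd i (\<lambda>y. f y $ b) x"
  by (simp add: pdv_def)

lemma pd_sum_eq:
  fixes g :: "'s::finite \<Rightarrow> real^'m::finite \<Rightarrow> real"
  assumes "\<And>s. dfa i (g s) x"
  shows "pd i (\<lambda>y. \<Sum>s\<in>UNIV. g s y) x = (\<Sum>s\<in>UNIV. pd i (g s) x)"
  using pd_sum[of UNIV i g x] assms by simp

lemma dfa_sum:
  fixes g :: "'s::finite \<Rightarrow> real^'m::finite \<Rightarrow> real"
  assumes "\<And>s. dfa i (g s) x"
  shows "dfa i (\<lambda>y. \<Sum>s\<in>UNIV. g s y) x"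
  using pd_sum[of UNIV i g x] assms by simp

lemma deriv_facts:
  fixes f :: "real^'m::finite \<Rightarrow> real^'n::finite" and Pm :: "real^'n^'n"
  assumes U: "open U" "x \<in> U" and sm: "\<And>b. Ck 2 U (\<lambda>y. f y $ b)"
  defines "vc \<equiv> \<lambda>a y. \<Sum>b\<in>UNIV. Pm $ a $ b * (f y $ b)"
  defines "F' \<equiv> \<lambda>y. \<Sum>a\<in>UNIV. vc a y * vc a y"
  defines "ga \<equiv> \<lambda>i b. pd i (\<lambda>y. f y $ b) x"
  defines "dd \<equiv> \<lambda>b i j. pd j (pd i (\<lambda>y. f y $ b)) x"
  shows "pd k F' x = 2 * (\<Sum>a\<in>UNIV. vc a x * (\<Sum>b\<in>UNIV. Pm $ a $ b * ga k b))"
    and "pd j (pd i F') x = 2 * (\<Sum>a\<in>UNIV. (\<Sum>b\<in>UNIV. Pm $ a $ b * dd b i j) * vc a x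
            + (\<Sum>b\<in>UNIV. Pm $ a $ b * ga i b) * (\<Sum>b\<in>UNIV. Pm $ a $ b * ga j b))"
    and "dd b i j = dd b j i"
    and "pd i (\<lambda>y. pdv j f y \<bullet> pdv l f y) x = (\<Sum>b\<in>UNIV. dd b j i * ga l b + ga j b * dd b l i)"
    and "Ck 2 U F'"
proof -
  let ?fb = "\<lambda>b y. f y $ b"
  have d1: "\<And>i y b. y \<in> U \<Longrightarrow> dfa i (?fb b) y"
    and d2: "\<And>i j y b. y \<in> U \<Longrightarrow> dfa j (pd i (?fb b)) y"
    using sm by (auto simp: Ck_Suc_iff numeral_2_eq_2)
  have smv: "Ck 2 U (vc a)" for a
    unfolding vc_def using sm by (intro Ck_sum[OF U(1)] Ck_cmult[OF U(1)]) auto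
  have e1: "\<And>i y a. y \<in> U \<Longrightarrow> dfa i (vc a) y"
    and e2: "\<And>i j y a. y \<in> U \<Longrightarrow> dfa j (pd i (vc a)) y"
    using smv by (auto simp: Ck_Suc_iff numeral_2_eq_2)
  have pdvc: "pd i (vc a) y = (\<Sum>b\<in>UNIV. Pm $ a $ b * pd i (?fb b) y)" if "y \<in> U" for i a y
  proof -
    have "pd i (vc a) y = (\<Sum>s\<in>UNIV. pd i (\<lambda>y. Pm $ a $ s * f y $ s) y)"
      unfolding vc_def by (rule pd_sum_eq) (rule pd_cmult(2)[OF d1[OF that]])
    also have "\<dots> = (\<Sum>b\<in>UNIV. Pm $ a $ b * pd i (?fb b) y)"
      by (rule sum.cong[OF refl]) (rule pd_cmult(1)[OF d1[OF that]])
    finally show ?thesis .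
  qed
  have pdF: "pd i F' y = (\<Sum>a\<in>UNIV. pd i (vc a) y * vc a y + vc a y * pd i (vc a) y)" if "y \<in> U" for i y
  proof -
    have "pd i F' y = (\<Sum>a\<in>UNIV. pd i (\<lambda>y. vc a y * vc a y) y)"
      unfolding F'_def by (rule pd_sum_eq) (rule pd_mult(2)[OF e1[OF that] e1[OF that]])
    also have "\<dots> = (\<Sum>a\<in>UNIV. pd i (vc a) y * vc a y + vc a y * pd i (vc a) y)"
      by (rule sum.cong[OF refl]) (rule pd_mult(1)[OF e1[OF that] e1[OF that]])
    finally show ?thesis .
  qed
  show "pd k F' x = 2 * (\<Sum>a\<in>UNIV. vc a x * (\<Sum>b\<in>UNIV. Pm $ a $ b * ga k b))"
    unfolding pdF[OF U(2)] pdvc[OF U(2)] ga_def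
    by (simp add: sum_distrib_left algebra_simps)
  have "pd j (pd i F') x = pd j (\<lambda>y. \<Sum>a\<in>UNIV. pd i (vc a) y * vc a y + vc a y * pd i (vc a) y) x"
    by (rule pd_cong(1)[OF U]) (rule pdF)
  also have "\<dots> = (\<Sum>a\<in>UNIV. pd j (\<lambda>y. pd i (vc a) y * vc a y + vc a y * pd i (vc a) y) x)"
    by (rule pd_sum_eq) (intro pd_add(2) pd_mult(2) e1 e2 U(2))
  also have "\<dots> = (\<Sum>a\<in>UNIV. (pd j (pd i (vc a)) x * vc a x + pd i (vc a) x * pd j (vc a) x)
        + (pd j (vc a) x * pd i (vc a) x + vc a x * pd j (pd i (vc a)) x))"
  proof (rule sum.cong[OF refl])
    fix a
    have m1: "dfa j (\<lambda>y. pd i (vc a) y * vc a y) x" "dfa j (\<lambda>y. vc a y * pd i (vc a) y) x"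
      by (intro pd_mult(2) e1 e2 U(2))+
    show "pd j (\<lambda>y. pd i (vc a) y * vc a y + vc a y * pd i (vc a) y) x =
       (pd j (pd i (vc a)) x * vc a x + pd i (vc a) x * pd j (vc a) x)
        + (pd j (vc a) x * pd i (vc a) x + vc a x * pd j (pd i (vc a)) x)"
      unfolding pd_add(1)[OF m1] pd_mult(1)[OF e2[OF U(2)] e1[OF U(2)]]
        pd_mult(1)[OF e1[OF U(2)] e2[OF U(2)]] ..
  qed
  also have "\<dots> = 2 * (\<Sum>a\<in>UNIV. (\<Sum>b\<in>UNIV. Pm $ a $ b * dd b i j) * vc a x
            + (\<Sum>b\<in>UNIV. Pm $ a $ b * ga i b) * (\<Sum>b\<in>UNIV. Pm $ a $ b * ga j b))"
  proof -
    have pp: "pd j (pd i (vc a)) x = (\<Sum>b\<in>UNIV. Pm $ a $ b * dd b i j)" for a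
    proof -
      have "pd j (pd i (vc a)) x = pd j (\<lambda>y. \<Sum>b\<in>UNIV. Pm $ a $ b * pd i (?fb b) y) x"
        by (rule pd_cong(1)[OF U]) (rule pdvc)
      also have "\<dots> = (\<Sum>b\<in>UNIV. pd j (\<lambda>y. Pm $ a $ b * pd i (?fb b) y) x)"
        by (rule pd_sum_eq) (rule pd_cmult(2)[OF d2[OF U(2)]])
      also have "\<dots> = (\<Sum>b\<in>UNIV. Pm $ a $ b * dd b i j)"
        unfolding dd_def by (rule sum.cong[OF refl]) (rule pd_cmult(1)[OF d2[OF U(2)]])
      finally show ?thesis .
    qed
    show ?thesis unfolding pp pdvc[OF U(2)] ga_def
      by (simp add: sum_distrib_left algebra_simps sum.distrib)
  qed
  finally show "pd j (pd i F') x = 2 * (\<Sum>a\<in>UNIV. (\<Sum>b\<in>UNIV. Pm $ a $ b * dd b i j) * vc a x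
            + (\<Sum>b\<in>UNIV. Pm $ a $ b * ga i b) * (\<Sum>b\<in>UNIV. Pm $ a $ b * ga j b))" .
  show "dd b i j = dd b j i" unfolding dd_def using schwarz[OF U sm] by simp
  show "pd i (\<lambda>y. pdv j f y \<bullet> pdv l f y) x = (\<Sum>b\<in>UNIV. dd b j i * ga l b + ga j b * dd b l i)"
  proof -
    have "pd i (\<lambda>y. pdv j f y \<bullet> pdv l f y) x = pd i (\<lambda>y. \<Sum>b\<in>UNIV. pd j (?fb b) y * pd l (?fb b) y) x"
      by (simp add: inner_vec_def pdv_comp)
    also have "\<dots> = (\<Sum>b\<in>UNIV. pd i (\<lambda>y. pd j (?fb b) y * pd l (?fb b) y) x)"
      by (rule pd_sum_eq) (rule pd_mult(2)[OF d2[OF U(2)] d2[OF U(2)]])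
    also have "\<dots> = (\<Sum>b\<in>UNIV. dd b j i * ga l b + ga j b * dd b l i)"
      unfolding dd_def ga_def by (rule sum.cong[OF refl]) (rule pd_mult(1)[OF d2[OF U(2)] d2[OF U(2)]])
    finally show ?thesis .
  qed
  show "Ck 2 U F'" unfolding F'_def using smv by (intro Ck_sum[OF U(1)] Ck_mult[OF U(1)]) auto
qed

lemma alg:
  fixes Gi :: "'m::finite \<Rightarrow> 'm \<Rightarrow> real" and Pm :: "'n::finite \<Rightarrow> 'n \<Rightarrow> real"
    and V :: "'n \<Rightarrow> real" and ga :: "'m \<Rightarrow> 'n \<Rightarrow> real" and dd :: "'n \<Rightarrow> 'm \<Rightarrow> 'm \<Rightarrow> real"
    and Ch :: "'m \<Rightarrow> 'm \<Rightarrow> 'm \<Rightarrow> real"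
  assumes H: "\<And>b. (\<Sum>i\<in>UNIV. \<Sum>j\<in>UNIV. Gi i j * (dd b i j - (\<Sum>k\<in>UNIV. Ch k i j * ga k b))) = 0"
  shows "(\<Sum>i\<in>UNIV. \<Sum>j\<in>UNIV. Gi i j *
     (2 * (\<Sum>a\<in>UNIV. (\<Sum>b\<in>UNIV. Pm a b * dd b i j) * V a + (\<Sum>b\<in>UNIV. Pm a b * ga i b) * (\<Sum>b\<in>UNIV. Pm a b * ga j b))
      - (\<Sum>k\<in>UNIV. Ch k i j * (2 * (\<Sum>a\<in>UNIV. V a * (\<Sum>b\<in>UNIV. Pm a b * ga k b))))))
   = 2 * (\<Sum>i\<in>UNIV. \<Sum>j\<in>UNIV. Gi i j * (\<Sum>a\<in>UNIV. (\<Sum>b\<in>UNIV. Pm a b * ga i b) * (\<Sum>b\<in>UNIV. Pm a b * ga j b)))"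
proof -
  define R where "R b i j = dd b i j - (\<Sum>k\<in>UNIV. Ch k i j * ga k b)" for b i j
  define PP where "PP i j = (\<Sum>a\<in>UNIV. (\<Sum>b\<in>UNIV. Pm a b * ga i b) * (\<Sum>b\<in>UNIV. Pm a b * ga j b))" for i j
  have inner: "2 * (\<Sum>a\<in>UNIV. (\<Sum>b\<in>UNIV. Pm a b * dd b i j) * V a + (\<Sum>b\<in>UNIV. Pm a b * ga i b) * (\<Sum>b\<in>UNIV. Pm a b * ga j b))
      - (\<Sum>k\<in>UNIV. Ch k i j * (2 * (\<Sum>a\<in>UNIV. V a * (\<Sum>b\<in>UNIV. Pm a b * ga k b))))
      = 2 * PP i j + 2 * (\<Sum>a\<in>UNIV. V a * (\<Sum>b\<in>UNIV. Pm a b * R b i j))" for i j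
  proof -
    have "(\<Sum>k\<in>UNIV. Ch k i j * (2 * (\<Sum>a\<in>UNIV. V a * (\<Sum>b\<in>UNIV. Pm a b * ga k b))))
        = 2 * (\<Sum>a\<in>UNIV. V a * (\<Sum>b\<in>UNIV. Pm a b * (\<Sum>k\<in>UNIV. Ch k i j * ga k b)))"
    proof -
      have "(\<Sum>k\<in>UNIV. Ch k i j * (2 * (\<Sum>a\<in>UNIV. V a * (\<Sum>b\<in>UNIV. Pm a b * ga k b))))
          = 2 * (\<Sum>k\<in>UNIV. \<Sum>a\<in>UNIV. \<Sum>b\<in>UNIV. V a * Pm a b * (Ch k i j * ga k b))"
        by (simp add: sum_distrib_left mult_ac)
      also have "\<dots> = 2 * (\<Sum>a\<in>UNIV. \<Sum>b\<in>UNIV. \<Sum>k\<in>UNIV. V a * Pm a b * (Ch k i j * ga k b))"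
        by (subst sum.swap) (subst (2) sum.swap, rule refl)
      also have "\<dots> = 2 * (\<Sum>a\<in>UNIV. V a * (\<Sum>b\<in>UNIV. Pm a b * (\<Sum>k\<in>UNIV. Ch k i j * ga k b)))"
        by (simp add: sum_distrib_left mult_ac)
      finally show ?thesis .
    qed
    moreover have "(\<Sum>a\<in>UNIV. V a * (\<Sum>b\<in>UNIV. Pm a b * R b i j)) =
       (\<Sum>a\<in>UNIV. (\<Sum>b\<in>UNIV. Pm a b * dd b i j) * V a) - (\<Sum>a\<in>UNIV. V a * (\<Sum>b\<in>UNIV. Pm a b * (\<Sum>k\<in>UNIV. Ch k i j * ga k b)))"
      unfolding R_def by (simp add: right_diff_distrib sum_subtractf mult_ac)
    ultimately show ?thesis unfolding PP_def by (simp add: sum.distrib algebra_simps)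
  qed
  have "(\<Sum>i\<in>UNIV. \<Sum>j\<in>UNIV. Gi i j * (2 * PP i j + 2 * (\<Sum>a\<in>UNIV. V a * (\<Sum>b\<in>UNIV. Pm a b * R b i j))))
     = 2 * (\<Sum>i\<in>UNIV. \<Sum>j\<in>UNIV. Gi i j * PP i j) + 2 * (\<Sum>i\<in>UNIV. \<Sum>j\<in>UNIV. \<Sum>a\<in>UNIV. \<Sum>b\<in>UNIV. V a * Pm a b * (Gi i j * R b i j))"
    by (simp add: sum.distrib sum_distrib_left algebra_simps)
  also have "(\<Sum>i\<in>UNIV. \<Sum>j\<in>UNIV. \<Sum>a\<in>UNIV. \<Sum>b\<in>UNIV. V a * Pm a b * (Gi i j * R b i j))
      = (\<Sum>a\<in>UNIV. \<Sum>b\<in>UNIV. V a * Pm a b * (\<Sum>i\<in>UNIV. \<Sum>j\<in>UNIV. Gi i j * R b i j))"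
  proof -
    have "(\<Sum>i\<in>UNIV. \<Sum>j\<in>UNIV. \<Sum>a\<in>UNIV. \<Sum>b\<in>UNIV. V a * Pm a b * (Gi i j * R b i j))
       = (\<Sum>i\<in>UNIV. \<Sum>a\<in>UNIV. \<Sum>b\<in>UNIV. \<Sum>j\<in>UNIV. V a * Pm a b * (Gi i j * R b i j))"
      by (intro sum.cong refl) (subst sum.swap, subst (2) sum.swap, rule refl)
    also have "\<dots> = (\<Sum>a\<in>UNIV. \<Sum>b\<in>UNIV. \<Sum>i\<in>UNIV. \<Sum>j\<in>UNIV. V a * Pm a b * (Gi i j * R b i j))"
      by (subst sum.swap, subst (2) sum.swap, rule refl)
    also have "\<dots> = (\<Sum>a\<in>UNIV. \<Sum>b\<in>UNIV. V a * Pm a b * (\<Sum>i\<in>UNIV. \<Sum>j\<in>UNIV. Gi i j * R b i j))"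
      by (simp add: sum_distrib_left)
    finally show ?thesis .
  qed
  also have "\<dots> = 0" using H unfolding R_def by simp
  finally show ?thesis unfolding inner PP_def by simp
qed

lemma lap_chart:
  fixes u :: "'p \<Rightarrow> real^'n::finite" and c :: "('p, 'm::finite) chart" and P :: "real^'n \<Rightarrow> real^'n"
    and gm :: "('p, 'm) metric"
  assumes U: "open (cdom c)" "x \<in> cdom c"
    and sm: "\<And>b. Ck 2 (cdom c) (\<lambda>y. (u \<circ> cinv c) y $ b)"
    and gmU: "\<And>y. y \<in> cdom c \<Longrightarrow> gm c y = induced_metric c u y"
    and H: "mean_curvature c u x = 0"
    and linP: "linear P"
  shows "laplacian_chart gm c (\<lambda>y. P ((u \<circ> cinv c) y) \<bullet> P ((u \<circ> cinv c) y)) x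
           = 2 * (\<Sum>i\<in>UNIV. \<Sum>j\<in>UNIV. matrix_inv (gm c x) $ i $ j *
                 (P (pdv j (u \<circ> cinv c) x) \<bullet> P (pdv i (u \<circ> cinv c) x)))"
    and "Ck 2 (cdom c) (\<lambda>y. P ((u \<circ> cinv c) y) \<bullet> P ((u \<circ> cinv c) y))"
proof -
  define f where "f = u \<circ> cinv c"
  define Pm where "Pm = matrix P"
  have Pmv: "Pm *v v = P v" for v unfolding Pm_def using linP by (simp add: matrix_works linear_matrix_vector_mul_eq)
  define vc where "vc a y = (\<Sum>b\<in>UNIV. Pm $ a $ b * (f y $ b))" for a y
  define F' where "F' = (\<lambda>y. \<Sum>a\<in>UNIV. vc a y * vc a y)"
  define ga where "ga i b = pd i (\<lambda>y. f y $ b) x" for i b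
  define dd where "dd b i j = pd j (pd i (\<lambda>y. f y $ b)) x" for b i j
  have Pcomp: "P v $ a = (\<Sum>b\<in>UNIV. Pm $ a $ b * v $ b)" for v a
    unfolding Pmv[symmetric] by (simp add: matrix_vector_mult_def)
  have FF: "(\<lambda>y. P (f y) \<bullet> P (f y)) = F'"
    unfolding F'_def vc_def by (simp add: inner_vec_def Pcomp)
  have smf: "\<And>b. Ck 2 (cdom c) (\<lambda>y. f y $ b)" using sm f_def by simp
  note DF1 = deriv_facts(1)[OF U smf, where Pm = Pm, folded vc_def, folded F'_def dd_def ga_def]
  note DF2 = deriv_facts(2)[OF U smf, where Pm = Pm, folded vc_def, folded F'_def dd_def ga_def]
  note DF3 = deriv_facts(3)[OF U smf, folded dd_def]
  note DF4 = deriv_facts(4)[OF U smf, folded dd_def ga_def]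
  note DF5 = deriv_facts(5)[OF U smf, where Pm = Pm, folded vc_def, folded F'_def]
  show "Ck 2 (cdom c) (\<lambda>y. P ((u \<circ> cinv c) y) \<bullet> P ((u \<circ> cinv c) y))"
    using DF5 FF f_def by simp
  define Gi where "Gi = matrix_inv (gm c x)"
  have IM: "induced_metric c u x = gm c x" using gmU[OF U(2)] by simp
  have gjl: "pd i (\<lambda>y. gm c y $ j $ l) x = (\<Sum>b\<in>UNIV. dd b j i * ga l b + ga j b * dd b l i)" for i j l
  proof -
    have "pd i (\<lambda>y. gm c y $ j $ l) x = pd i (\<lambda>y. pdv j f y \<bullet> pdv l f y) x"
      by (rule pd_cong(1)[OF U]) (simp add: gmU induced_metric_def f_def)
    then show ?thesis using DF4 by simp
  qed
  have Ch: "christoffel gm c x k i j = (\<Sum>l\<in>UNIV. Gi $ k $ l * (\<Sum>b\<in>UNIV. dd b i j * ga l b))" for k i j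
  proof -
    have "pd i (\<lambda>y. gm c y $ j $ l) x + pd j (\<lambda>y. gm c y $ i $ l) x - pd l (\<lambda>y. gm c y $ i $ j) x
          = 2 * (\<Sum>b\<in>UNIV. dd b i j * ga l b)" for l
    proof -
      have "pd i (\<lambda>y. gm c y $ j $ l) x + pd j (\<lambda>y. gm c y $ i $ l) x - pd l (\<lambda>y. gm c y $ i $ j) x
         = (\<Sum>b\<in>UNIV. (dd b j i * ga l b + ga j b * dd b l i) + (dd b i j * ga l b + ga i b * dd b l j)
               - (dd b i l * ga j b + ga i b * dd b j l))"
        unfolding gjl by (simp add: sum.distrib sum_subtractf)
      also have "\<dots> = (\<Sum>b\<in>UNIV. 2 * (dd b i j * ga l b))"
        by (rule sum.cong[OF refl]) (simp add: DF3[of _ j i] DF3[of _ l i] DF3[of _ l j])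
      finally show ?thesis by (simp add: sum_distrib_left)
    qed
    then show ?thesis unfolding christoffel_def Gi_def by (simp add: sum_distrib_left)
  qed
  have Hc: "(\<Sum>i\<in>UNIV. \<Sum>j\<in>UNIV. Gi $ i $ j * (dd b i j - (\<Sum>k\<in>UNIV. christoffel gm c x k i j * ga k b))) = 0" for b
  proof -
    have m: "real CARD('m) \<noteq> 0" by simp
    have "(\<Sum>i\<in>UNIV. \<Sum>j\<in>UNIV. matrix_inv (induced_metric c u x) $ i $ j *\<^sub>R second_ff c u x i j) = 0"
      using H m unfolding mean_curvature_def by simp
    then have "(\<Sum>i\<in>UNIV. \<Sum>j\<in>UNIV. matrix_inv (induced_metric c u x) $ i $ j *\<^sub>R second_ff c u x i j) $ b = 0"
      by simp
    then have "(\<Sum>i\<in>UNIV. \<Sum>j\<in>UNIV. Gi $ i $ j * (second_ff c u x i j $ b)) = 0"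
      unfolding IM Gi_def by simp
    moreover have "second_ff c u x i j $ b = dd b i j - (\<Sum>k\<in>UNIV. christoffel gm c x k i j * ga k b)" for i j
    proof -
      have w: "pdv j (pdv i (u \<circ> cinv c)) x $ b' = dd b' i j" for b'
        unfolding dd_def f_def by (simp add: pdv_def)
      have al: "pdv l (u \<circ> cinv c) x $ b' = ga l b'" for l b'
        unfolding ga_def f_def by (simp add: pdv_def)
      have "tangential c u x (pdv j (pdv i (u \<circ> cinv c)) x) $ b
          = (\<Sum>k\<in>UNIV. \<Sum>l\<in>UNIV. Gi $ k $ l * (\<Sum>b'\<in>UNIV. dd b' i j * ga l b') * ga k b)"
        unfolding tangential_def IM Gi_def by (simp add: inner_vec_def w al)
      also have "\<dots> = (\<Sum>k\<in>UNIV. christoffel gm c x k i j * ga k b)"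
        unfolding Ch by (simp add: sum_distrib_right)
      finally show ?thesis unfolding second_ff_def Let_def by (simp add: w)
    qed
    ultimately show ?thesis by simp
  qed
  have "laplacian_chart gm c F' x = (\<Sum>i\<in>UNIV. \<Sum>j\<in>UNIV. Gi $ i $ j *
     (2 * (\<Sum>a\<in>UNIV. (\<Sum>b\<in>UNIV. Pm $ a $ b * dd b i j) * vc a x + (\<Sum>b\<in>UNIV. Pm $ a $ b * ga i b) * (\<Sum>b\<in>UNIV. Pm $ a $ b * ga j b))
      - (\<Sum>k\<in>UNIV. christoffel gm c x k i j * (2 * (\<Sum>a\<in>UNIV. vc a x * (\<Sum>b\<in>UNIV. Pm $ a $ b * ga k b))))))"
    unfolding laplacian_chart_def Gi_def DF1 DF2 ..
  also have "\<dots> = 2 * (\<Sum>i\<in>UNIV. \<Sum>j\<in>UNIV. Gi $ i $ j * (\<Sum>a\<in>UNIV. (\<Sum>b\<in>UNIV. Pm $ a $ b * ga i b) * (\<Sum>b\<in>UNIV. Pm $ a $ b * ga j b)))"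
    by (rule alg[where Gi = "\<lambda>i j. Gi $ i $ j" and Pm = "\<lambda>a b. Pm $ a $ b" and V = "\<lambda>a. vc a x"
          and Ch = "christoffel gm c x", OF Hc])
  also have "\<dots> = 2 * (\<Sum>i\<in>UNIV. \<Sum>j\<in>UNIV. Gi $ i $ j * (P (pdv j f x) \<bullet> P (pdv i f x)))"
  proof -
    have "P (pdv j f x) \<bullet> P (pdv i f x) = (\<Sum>a\<in>UNIV. (\<Sum>b\<in>UNIV. Pm $ a $ b * ga i b) * (\<Sum>b\<in>UNIV. Pm $ a $ b * ga j b))" for i j
      unfolding ga_def by (simp add: inner_vec_def Pcomp pdv_def mult.commute)
    then show ?thesis by simp
  qed
  finally show "laplacian_chart gm c (\<lambda>y. P ((u \<circ> cinv c) y) \<bullet> P ((u \<circ> cinv c) y)) x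
           = 2 * (\<Sum>i\<in>UNIV. \<Sum>j\<in>UNIV. matrix_inv (gm c x) $ i $ j *
                 (P (pdv j (u \<circ> cinv c) x) \<bullet> P (pdv i (u \<circ> cinv c) x)))"
    using FF f_def Gi_def by simp
qed

theorem mainTheorem3:
  fixes T :: "'p topology"
    and A :: "('p, 'm::finite) chart set"
    and gm :: "('p, 'm) metric"
    and u :: "'p \<Rightarrow> real^'n::finite"
  assumes "smooth_manifold T A"
    and "connected_space T"
    and "riemannian_metric T A gm"
    and "stochastically_complete T A gm"
    and "minimal_immersion T A gm u"
  shows "\<not> bounded (u ` topspace T) \<and>
         (\<forall>P :: real^'n \<Rightarrow> real^'n. orth_projection P \<and>
             int CARD('m) + int (rk_map P) - int CARD('n) \<ge> 1 \<longrightarrow>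
             \<not> bounded ((P \<circ> u) ` topspace T))"
proof -
  have atlas: "smooth_atlas T A" using assms(1) by (simp add: smooth_manifold_def)
  have opn: "open (cdom c)" if "c \<in> A" for c
    using atlas that by (simp add: smooth_atlas_def is_chart_def cdom_def)
  have cover: "\<exists>c\<in>A. p \<in> fst c" if "p \<in> topspace T" for p
    using atlas that by (simp add: smooth_atlas_def)
  have MI: "smooth_map T A u" "\<And>c x. c \<in> A \<Longrightarrow> x \<in> cdom c \<Longrightarrow> rank (jacobian c u x) = CARD('m)"
    "\<And>c x. c \<in> A \<Longrightarrow> x \<in> cdom c \<Longrightarrow> gm c x = induced_metric c u x"
    "\<And>c x. c \<in> A \<Longrightarrow> x \<in> cdom c \<Longrightarrow> mean_curvature c u x = 0"
    using assms(5) by (auto simp: minimal_immersion_def)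
  have sm: "Ck 2 (cdom c) (\<lambda>y. (u \<circ> cinv c) y $ b)" if "c \<in> A" for c b
    using MI(1) that by (auto simp: smooth_map_def smoothV_on_def CkV_def)
  have partb: "\<not> bounded ((P \<circ> u) ` topspace T)"
    if P: "orth_projection P" and dc: "int CARD('m) + int (rk_map P) - int CARD('n) \<ge> 1" for P :: "real^'n \<Rightarrow> real^'n"
  proof
    assume bd: "bounded ((P \<circ> u) ` topspace T)"
    have linP: "linear P" using P by (simp add: orth_projection_def)
    define F where "F p = P (u p) \<bullet> P (u p)" for p
    have Fc: "F \<circ> cinv c = (\<lambda>y. P ((u \<circ> cinv c) y) \<bullet> P ((u \<circ> cinv c) y))" for c
      by (simp add: F_def o_def)
    have "Ck_fun 2 T A F"
      unfolding Ck_fun_def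
    proof
      fix c assume cA: "c \<in> A"
      define Pm where "Pm = matrix P"
      have Pmv: "Pm *v v = P v" for v unfolding Pm_def using linP by (simp add: matrix_works linear_matrix_vector_mul_eq)
      have Pcomp: "P v $ a = (\<Sum>b\<in>UNIV. Pm $ a $ b * v $ b)" for v a
        unfolding Pmv[symmetric] by (simp add: matrix_vector_mult_def)
      have eq: "F \<circ> cinv c = (\<lambda>y. \<Sum>a\<in>UNIV. (\<Sum>b\<in>UNIV. Pm $ a $ b * (u \<circ> cinv c) y $ b) * (\<Sum>b\<in>UNIV. Pm $ a $ b * (u \<circ> cinv c) y $ b))"
        unfolding Fc by (simp add: inner_vec_def Pcomp)
      have vcC: "Ck 2 (cdom c) (\<lambda>y. \<Sum>b\<in>UNIV. Pm $ a $ b * (u \<circ> cinv c) y $ b)" for a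
        using sm[OF cA] by (intro Ck_sum[OF opn[OF cA]] Ck_cmult[OF opn[OF cA]]) auto
      show "Ck 2 (cdom c) (F \<circ> cinv c)"
        unfolding eq by (rule Ck_sum[OF opn[OF cA] finite], rule Ck_mult[OF opn[OF cA]], rule vcC, rule vcC)
    qed
    moreover have "bdd_above (F ` topspace T)"
    proof -
      obtain B where B: "\<And>y. y \<in> (P \<circ> u) ` topspace T \<Longrightarrow> norm y \<le> B"
        using bd bounded_iff by metis
      have "F p \<le> B^2" if "p \<in> topspace T" for p
      proof -
        have "norm (P (u p)) \<le> B" using B that by auto
        then have "norm (P (u p))^2 \<le> B^2" by (simp add: power_mono)
        then show ?thesis by (simp add: F_def power2_norm_eq_inner)
      qed
      then show ?thesis by (rule bdd_aboveI2)
    qed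
    ultimately obtain ps :: "nat \<Rightarrow> 'p" where ps: "\<forall>k\<ge>1. ps k \<in> topspace T \<and>
            F (ps k) > (SUP q\<in>topspace T. F q) - 1 / real k \<and> laplacian A gm F (ps k) < 1 / real k"
      using assms(4) unfolding stochastically_complete_def by blast
    then have p1: "ps 1 \<in> topspace T" "laplacian A gm F (ps 1) < 1" by auto
    define c where "c = (SOME c. c \<in> A \<and> ps 1 \<in> fst c)"
    have "\<exists>c. c \<in> A \<and> ps 1 \<in> fst c" using cover[OF p1(1)] by blast
    then have "c \<in> A \<and> ps 1 \<in> fst c" unfolding c_def by (rule someI_ex)
    then have c: "c \<in> A" "ps 1 \<in> fst c" by auto
    define x where "x = snd c (ps 1)"
    have x: "x \<in> cdom c" using c by (simp add: x_def cdom_def)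
    have lap: "laplacian A gm F (ps 1) = laplacian_chart gm c (F \<circ> cinv c) x"
      unfolding laplacian_def c_def x_def Let_def by simp
    define a where "a i = pdv i (u \<circ> cinv c) x" for i
    have rk: "rank (\<chi> r i. a i $ r) = CARD('m)"
      using MI(2)[OF c(1) x] by (simp add: jacobian_def a_def)
    have G: "gm c x = (\<chi> i j. a i \<bullet> a j)"
      using MI(3)[OF c(1) x] by (simp add: induced_metric_def a_def)
    have L: "laplacian_chart gm c (F \<circ> cinv c) x
        = 2 * (\<Sum>i\<in>UNIV. \<Sum>j\<in>UNIV. matrix_inv (gm c x) $ i $ j * (P (a j) \<bullet> P (a i)))"
      unfolding Fc a_def
      by (rule lap_chart(1)[where c=c and x=x and u=u and gm=gm and P=P, OF opn[OF c(1)] x sm[OF c(1)] MI(3)[OF c(1)] MI(4)[OF c(1) x] linP])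
    have "laplacian_chart gm c (F \<circ> cinv c) x
        = 2 * (\<Sum>i\<in>UNIV. \<Sum>j\<in>UNIV. matrix_inv (\<chi> i j. a i \<bullet> a j) $ i $ j * (P (a j) \<bullet> P (a i)))"
      using L unfolding G .
    also have "\<dots> \<ge> 2" using linalg_bound[OF rk P dc] by simp
    finally show False using p1(2) lap by simp
  qed
  have "\<not> bounded (u ` topspace T)"
  proof -
    have oid: "orth_projection (id :: real^'n \<Rightarrow> real^'n)"
      by (simp add: orth_projection_def linear_id)
    have "rk_map (id :: real^'n \<Rightarrow> real^'n) = CARD('n)"
      by (simp add: rk_map_def)
    then have "int CARD('m) + int (rk_map (id :: real^'n \<Rightarrow> real^'n)) - int CARD('n) \<ge> 1"
      by simp
    then show ?thesis using partb[OF oid] by simp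
  qed
  then show ?thesis using partb by blast
qed

end
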